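(* Let $u>0$ and suppose there is an open set $S\ni\theta_i$ with $\sup_{\theta\in S}E_\theta|X_{i,t}|^p<\infty$ for some $p>u$. Then for every $k\in\mathbb N_0$, $$\sup_{\theta\in S}m_\theta^{(k)}(u)=\sup_{\theta\in S}\frac1{\sqrt{2\pi}}\sum_{n=0}^\infty\exp\Big(-\frac{Q_n(\theta)^2}{2u}\Big)|Q_n(\theta)|^k<\infty.$$
   Context: $X_{i,t}$ is an $\mathbb N_0$-valued random variable with distribution depending on $\theta\in\mathbb R^{K_i}$, $C_n(\theta)=P_\theta[X_{i,t}\le n]$, $Q_n(\theta)=\Phi^{-1}(C_n(\theta))$ with $\Phi$ the standard normal CDF; summands with $Q_n(\theta)=\pm\infty$ are interpreted as $0$. *)

theory Defs
  imports "HOL-Probability.Probability"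
begin

definition Phi :: "real \<Rightarrow> real" where
  "Phi x = measure (density lborel std_normal_density) {..x}"

text \<open>Inverse of \<Phi> on (0,1); outside (0,1) it is \<plusminus>\<infinity> and is never used.\<close>
definition Phi_inv :: "real \<Rightarrow> real" where
  "Phi_inv c = (THE x. Phi x = c)"

definition Cn :: "('a \<Rightarrow> nat pmf) \<Rightarrow> 'a \<Rightarrow> nat \<Rightarrow> real" where
  "Cn P \<theta> n = measure_pmf.prob (P \<theta>) {..n}"

text \<open>Q_n(\<theta>) = \<Phi>^{-1}(C_n(\<theta>)), meaningful (finite) iff 0 < C_n(\<theta>) < 1.\<close>
definition Qn :: "('a \<Rightarrow> nat pmf) \<Rightarrow> 'a \<Rightarrow> nat \<Rightarrow> real" where
  "Qn P \<theta> n = Phi_inv (Cn P \<theta> n)"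

text \<open>n-th summand of m_\<theta>^{(k)}(u); summands with Q_n = \<plusminus>\<infinity> (C_n \<in> {0,1}) are 0.\<close>
definition m_summand :: "('a \<Rightarrow> nat pmf) \<Rightarrow> nat \<Rightarrow> real \<Rightarrow> 'a \<Rightarrow> nat \<Rightarrow> real" where
  "m_summand P k u \<theta> n =
     (if 0 < Cn P \<theta> n \<and> Cn P \<theta> n < 1
      then exp (- (Qn P \<theta> n)\<^sup>2 / (2 * u)) * \<bar>Qn P \<theta> n\<bar> ^ k / sqrt (2 * pi)
      else 0)"

text \<open>m_\<theta>^{(k)}(u) as an extended nonnegative real (the summands are nonnegative).\<close>
definition m_fun :: "('a \<Rightarrow> nat pmf) \<Rightarrow> nat \<Rightarrow> real \<Rightarrow> 'a \<Rightarrow> ennreal" where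
  "m_fun P k u \<theta> = (\<Sum>n. ennreal (m_summand P k u \<theta> n))"

end

theory Submission imports Defs begin

lemma rd: "real_distribution (density lborel std_normal_density)"
  using prob_space_normal_density by (auto simp: real_distribution_def real_distribution_axioms_def)

lemma Phi_cdf: "Phi x = cdf (density lborel std_normal_density) x"
  by (simp add: Phi_def cdf_def)

lemma snd_mono: "\<bar>x\<bar> \<le> t \<Longrightarrow> std_normal_density t \<le> std_normal_density x"
proof -
  assume "\<bar>x\<bar> \<le> t"
  hence "x\<^sup>2 \<le> t\<^sup>2" by (metis abs_ge_zero abs_le_square_iff abs_of_nonneg order_trans)
  thus ?thesis unfolding std_normal_density_def
    by (intro mult_left_mono) auto
qed

lemma snd_pos: "std_normal_density x > 0"
  unfolding std_normal_density_def by simp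

lemma meas_lower:
  assumes "a \<le> b" "\<And>x. x \<in> {a<..b} \<Longrightarrow> m \<le> std_normal_density x" "0 \<le> m"
  shows "m * (b - a) \<le> measure (density lborel std_normal_density) {a<..b}"
proof -
  interpret prob_space "density lborel std_normal_density" using prob_space_normal_density[of 1 0] by simp
  have "ennreal (m * (b - a)) = (\<integral>\<^sup>+ x. ennreal m * indicator {a<..b} x \<partial>lborel)"
    using assms by (simp add: nn_integral_cmult_indicator ennreal_mult)
  also have "\<dots> \<le> (\<integral>\<^sup>+ x. ennreal (std_normal_density x) * indicator {a<..b} x \<partial>lborel)"
    using assms(2) by (intro nn_integral_mono) (auto split: split_indicator)
  also have "\<dots> = emeasure (density lborel std_normal_density) {a<..b}"
    by (simp add: emeasure_density)
  also have "\<dots> = ennreal (measure (density lborel std_normal_density) {a<..b})"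
    by (simp add: emeasure_eq_measure)
  finally show ?thesis by (simp add: ennreal_le_iff)
qed

lemma Phi_cont: "isCont Phi x"
proof -
  interpret real_distribution "density lborel std_normal_density" by (rule rd)
  have "emeasure (density lborel std_normal_density) {x} = 0"
    by (simp add: emeasure_density)
  hence "measure (density lborel std_normal_density) {x} = 0"
    by (simp add: measure_def)
  hence "isCont (cdf (density lborel std_normal_density)) x" by (simp add: isCont_cdf)
  moreover have "Phi = cdf (density lborel std_normal_density)" by (rule ext, rule Phi_cdf)
  ultimately show ?thesis by simp
qed

lemma Phi_strict: assumes "a < b" shows "Phi a < Phi b"
proof -
  interpret real_distribution "density lborel std_normal_density" by (rule rd)
  have "std_normal_density (\<bar>a\<bar> + \<bar>b\<bar>) * (b - a) \<le> measure (density lborel std_normal_density) {a<..b}"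
    using assms by (intro meas_lower snd_mono) (auto intro: less_imp_le snd_pos)
  moreover have "std_normal_density (\<bar>a\<bar> + \<bar>b\<bar>) * (b - a) > 0" using assms snd_pos by simp
  ultimately show ?thesis using cdf_diff_eq[of a b] assms unfolding Phi_cdf by simp
qed

lemma Phi_inv: assumes "0 < c" "c < 1" shows "Phi (Phi_inv c) = c"
proof -
  interpret real_distribution "density lborel std_normal_density" by (rule rd)
  have P: "Phi = cdf (density lborel std_normal_density)" by (rule ext, rule Phi_cdf)
  have "eventually (\<lambda>x. Phi x < c) at_bot"
    using order_tendstoD(2)[OF cdf_lim_at_bot assms(1)] P by simp
  then obtain a where a: "Phi a < c" by (auto simp: eventually_at_bot_linorder)
  have "eventually (\<lambda>x. Phi x > c) at_top"
    using order_tendstoD(1)[OF cdf_lim_at_top_prob assms(2)] P by simp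
  then obtain b0 where b0: "\<And>x. x \<ge> b0 \<Longrightarrow> Phi x > c" by (auto simp: eventually_at_top_linorder)
  define b where "b = max a b0"
  have b: "Phi b > c" "a \<le> b" using b0 by (auto simp: b_def)
  obtain x where x: "Phi x = c"
    using IVT[of Phi a c b] a b Phi_cont by auto
  have "(THE x. Phi x = c) = x"
  proof (rule the_equality)
    fix y assume "Phi y = c"
    thus "y = x" using x Phi_strict by (metis linorder_neqE_linordered_idom less_irrefl)
  qed (rule x)
  thus ?thesis using x by (simp add: Phi_inv_def)
qed

lemma Phi_tail: "std_normal_density (\<bar>q\<bar> + 1) \<le> 1 - Phi q"
proof -
  interpret real_distribution "density lborel std_normal_density" by (rule rd)
  have "std_normal_density (\<bar>q\<bar> + 1) * ((q+1) - q) \<le> measure (density lborel std_normal_density) {q<..q+1}"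
    by (intro meas_lower snd_mono) (auto intro: less_imp_le snd_pos)
  moreover have "Phi (q+1) \<le> 1" unfolding Phi_cdf by (rule cdf_bounded_prob)
  ultimately show ?thesis using cdf_diff_eq[of q "q+1"] unfolding Phi_cdf by simp
qed


lemma pow_exp: assumes "(y::real) \<ge> 0" shows "y ^ k \<le> real k ^ k * exp y"
proof (cases "k = 0")
  case True thus ?thesis using assms by simp
next
  case False
  hence kp: "real k > 0" by simp
  have "y / k \<le> exp (y / k)" using exp_ge_add_one_self[of "y/k"] by linarith
  hence "(y / k) ^ k \<le> exp (y / k) ^ k" using assms kp by (intro power_mono) auto
  also have "\<dots> = exp y" using kp by (simp add: exp_of_nat_mult[symmetric])
  finally have "y ^ k / real k ^ k \<le> exp y" by (simp add: power_divide)
  thus ?thesis using kp by (simp add: divide_le_eq mult.commute)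
qed

lemma poly_exp: assumes "c > 0" "t \<ge> 0" shows "exp (- c * t\<^sup>2) * t ^ k \<le> 1 + real k ^ k / c ^ k"
proof -
  have "t ^ k \<le> 1 + t ^ (2*k)"
  proof (cases "t \<le> 1")
    case True thus ?thesis using power_le_one[of t k] assms zero_le_power[of t "2*k"] by linarith
  next
    case False thus ?thesis using power_increasing[of k "2*k" t] zero_le_power[of t "2*k"] by linarith
  qed
  have h: "(c * t\<^sup>2) ^ k \<le> real k ^ k * exp (c * t\<^sup>2)" using assms by (intro pow_exp) auto
  have eq: "(c * t\<^sup>2) ^ k = c ^ k * t ^ (2*k)" by (simp add: power_mult_distrib power_mult)
  have ck: "c ^ k > 0" using assms by simp
  have "t ^ (2*k) \<le> real k ^ k * exp (c * t\<^sup>2) / c ^ k"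
    using h ck unfolding eq by (subst pos_le_divide_eq) (auto simp: mult.commute)
  hence "exp (- c * t\<^sup>2) * t ^ (2*k) \<le> exp (- c * t\<^sup>2) * (real k ^ k * exp (c * t\<^sup>2) / c ^ k)"
    by (intro mult_left_mono) auto
  also have "\<dots> = real k ^ k / c ^ k" by (simp add: exp_minus field_simps)
  finally have "exp (- c * t\<^sup>2) * t ^ (2*k) \<le> real k ^ k / c ^ k" .
  moreover have "exp (- c * t\<^sup>2) \<le> 1" using assms by simp
  moreover have "exp (- c * t\<^sup>2) * t ^ k \<le> exp (- c * t\<^sup>2) * (1 + t ^ (2*k))"
    using \<open>t ^ k \<le> 1 + t ^ (2*k)\<close> by (intro mult_left_mono) auto
  ultimately show ?thesis by (simp only: distrib_left mult_1_right)
qed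

lemma gauss_bound:
  fixes u \<alpha> t :: real
  assumes "u > 0" "\<alpha> > 0" "\<alpha> < 1/u" "t \<ge> 0"
  shows "exp (- t\<^sup>2 / (2*u)) * t ^ k \<le>
     (1 + real k ^ k / ((1/u - \<alpha>)/4) ^ k) * exp (\<alpha>\<^sup>2/(1/u - \<alpha>) + \<alpha>/2) * exp (- \<alpha> * (t+1)\<^sup>2 / 2)"
proof -
  define d where "d = 1/u - \<alpha>"
  have d: "d > 0" using assms by (simp add: d_def)
  have sq: "- d * t\<^sup>2 / 4 + \<alpha> * t \<le> \<alpha>\<^sup>2 / d"
  proof -
    have "0 \<le> (d*t/2 - \<alpha>)\<^sup>2" by simp
    hence "d * (- d * t\<^sup>2 / 4 + \<alpha> * t) \<le> \<alpha>\<^sup>2"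
      by (simp add: power2_eq_square algebra_simps)
    thus ?thesis using d by (simp add: le_divide_eq mult.commute)
  qed
  have E: "- t\<^sup>2 / (2*u) = - (d/4) * t\<^sup>2 + (- \<alpha> * (t+1)\<^sup>2 / 2) + (- d * t\<^sup>2 / 4 + \<alpha> * t + \<alpha>/2)"
  proof -
    have "- (d/4) * t\<^sup>2 + (- \<alpha> * (t+1)\<^sup>2 / 2) + (- d * t\<^sup>2 / 4 + \<alpha> * t + \<alpha>/2) = - (d + \<alpha>) * t\<^sup>2 / 2"
      by (simp add: power2_eq_square field_simps)
    also have "d + \<alpha> = 1/u" by (simp add: d_def)
    finally show ?thesis by simp
  qed
  have "exp (- t\<^sup>2 / (2*u)) = exp (- (d/4) * t\<^sup>2) * exp (- \<alpha> * (t+1)\<^sup>2 / 2) * exp (- d * t\<^sup>2 / 4 + \<alpha> * t + \<alpha>/2)"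
    by (subst E, simp only: exp_add)
  also have "\<dots> \<le> exp (- (d/4) * t\<^sup>2) * exp (- \<alpha> * (t+1)\<^sup>2 / 2) * exp (\<alpha>\<^sup>2/d + \<alpha>/2)"
    using sq by (intro mult_left_mono) auto
  finally have "exp (- t\<^sup>2 / (2*u)) * t ^ k \<le> exp (- (d/4) * t\<^sup>2) * exp (- \<alpha> * (t+1)\<^sup>2 / 2) * exp (\<alpha>\<^sup>2/d + \<alpha>/2) * t ^ k"
    using assms by (intro mult_right_mono) auto
  also have "\<dots> = (exp (- (d/4) * t\<^sup>2) * t ^ k) * exp (\<alpha>\<^sup>2/d + \<alpha>/2) * exp (- \<alpha> * (t+1)\<^sup>2 / 2)"
    by (simp only: mult_ac)
  also have "\<dots> \<le> (1 + real k ^ k / (d/4) ^ k) * exp (\<alpha>\<^sup>2/d + \<alpha>/2) * exp (- \<alpha> * (t+1)\<^sup>2 / 2)"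
    using poly_exp[of "d/4" t k] d assms by (intro mult_right_mono) auto
  finally show ?thesis by (simp only: d_def)
qed


lemma markov_tail:
  fixes Q :: "nat pmf" and p M :: real and n :: nat
  assumes "p > 0" "M \<ge> 0" "(\<integral>\<^sup>+ x. ennreal (real x powr p) \<partial>measure_pmf Q) \<le> ennreal M"
  shows "1 - measure_pmf.prob Q {..n} \<le> M / (real n + 1) powr p"
proof -
  define A where "A = UNIV - {..n}"
  have "ennreal ((real n + 1) powr p) * emeasure (measure_pmf Q) A
      = (\<integral>\<^sup>+ x. ennreal ((real n + 1) powr p) * indicator A x \<partial>measure_pmf Q)"
    by (simp add: nn_integral_cmult_indicator)
  also have "\<dots> \<le> (\<integral>\<^sup>+ x. ennreal (real x powr p) \<partial>measure_pmf Q)"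
  proof (intro nn_integral_mono)
    fix x assume "x \<in> space (measure_pmf Q)"
    show "ennreal ((real n + 1) powr p) * indicator A x \<le> ennreal (real x powr p)"
    proof (cases "x \<in> A")
      case True
      hence "real n + 1 \<le> real x" by (auto simp: A_def)
      hence "(real n + 1) powr p \<le> real x powr p" using assms(1) by (intro powr_mono2) auto
      thus ?thesis using True by (simp add: ennreal_leI)
    qed simp
  qed
  also have "\<dots> \<le> ennreal M" by (rule assms(3))
  finally have "ennreal ((real n + 1) powr p * measure_pmf.prob Q A) \<le> ennreal M"
    by (simp add: measure_pmf.emeasure_eq_measure ennreal_mult)
  hence "(real n + 1) powr p * measure_pmf.prob Q A \<le> M" using assms(2) by (simp add: ennreal_le_iff)
  moreover have "measure_pmf.prob Q A = 1 - measure_pmf.prob Q {..n}"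
    unfolding A_def using measure_pmf.prob_compl[of "{..n}" Q] by simp
  moreover have "(real n + 1) powr p > 0" by simp
  ultimately show ?thesis by (simp add: pos_le_divide_eq mult.commute)
qed

lemma summand_bound:
  fixes P :: "'a \<Rightarrow> nat pmf"
  assumes u: "u > 0" and a: "\<alpha> > 0" "\<alpha> < 1/u" and tail: "1 - Cn P \<theta> n \<le> T" 
  shows "m_summand P k u \<theta> n \<le>
    (1 + real k ^ k / ((1/u - \<alpha>)/4) ^ k) * exp (\<alpha>\<^sup>2/(1/u - \<alpha>) + \<alpha>/2) * sqrt (2*pi) powr \<alpha> / sqrt (2*pi)
    * T powr \<alpha>"
proof -
  define C1 where "C1 = (1 + real k ^ k / ((1/u - \<alpha>)/4) ^ k) * exp (\<alpha>\<^sup>2/(1/u - \<alpha>) + \<alpha>/2)"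
  have C1: "C1 > 0" unfolding C1_def using a by (intro mult_pos_pos add_pos_nonneg) auto
  show ?thesis
  proof (cases "0 < Cn P \<theta> n \<and> Cn P \<theta> n < 1")
    case False
    hence "m_summand P k u \<theta> n = 0" unfolding m_summand_def by (rule if_not_P)
    moreover have "0 \<le> C1 * sqrt (2*pi) powr \<alpha> / sqrt (2*pi) * T powr \<alpha>" using C1 by simp
    ultimately show ?thesis unfolding C1_def by simp
  next
    case True
    define q where "q = Qn P \<theta> n"
    define t where "t = \<bar>q\<bar>"
    have t: "t \<ge> 0" by (simp add: t_def)
    have Phq: "Phi q = Cn P \<theta> n" unfolding q_def Qn_def using True by (intro Phi_inv) auto
    have s: "m_summand P k u \<theta> n = exp (- t\<^sup>2 / (2*u)) * t ^ k / sqrt (2*pi)"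
      using True by (simp add: m_summand_def q_def[symmetric] t_def)
    have g: "exp (- t\<^sup>2 / (2*u)) * t ^ k \<le> C1 * exp (- \<alpha> * (t+1)\<^sup>2 / 2)"
      unfolding C1_def using gauss_bound[OF u a t] .
    have ph: "std_normal_density (t+1) powr \<alpha> = exp (- \<alpha> * (t+1)\<^sup>2 / 2) / sqrt (2*pi) powr \<alpha>"
      unfolding std_normal_density_def
      by (simp add: powr_divide exp_powr_real mult.commute)
    have "std_normal_density (t+1) \<le> 1 - Cn P \<theta> n" using Phi_tail[of q] Phq by (simp add: t_def)
    also have "\<dots> \<le> T" by (rule tail)
    finally have "std_normal_density (t+1) powr \<alpha> \<le> T powr \<alpha>"
      using a snd_pos[of "t+1"] by (intro powr_mono2) auto
    hence e: "exp (- \<alpha> * (t+1)\<^sup>2 / 2) \<le> sqrt (2*pi) powr \<alpha> * T powr \<alpha>"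
      unfolding ph by (simp add: divide_le_eq mult.commute)
    have "m_summand P k u \<theta> n \<le> C1 * exp (- \<alpha> * (t+1)\<^sup>2 / 2) / sqrt (2*pi)"
      unfolding s using g by (intro divide_right_mono) auto
    also have "\<dots> \<le> C1 * (sqrt (2*pi) powr \<alpha> * T powr \<alpha>) / sqrt (2*pi)"
      using e C1 by (intro divide_right_mono mult_left_mono) auto
    finally show ?thesis unfolding C1_def by (simp add: mult_ac)
  qed
qed

theorem mainTheorem8:
  fixes P :: "real ^ 'k \<Rightarrow> nat pmf"
    and \<theta>0 :: "real ^ 'k"
    and S :: "(real ^ 'k) set"
    and u :: real
  assumes "u > 0"
    and "open S" and "\<theta>0 \<in> S"
    and "\<exists>p > u. (SUP \<theta>\<in>S. \<integral>\<^sup>+ n. ennreal (real n powr p) \<partial>measure_pmf (P \<theta>)) < \<infinity>"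
  shows "\<forall>k::nat. (SUP \<theta>\<in>S. m_fun P k u \<theta>) < \<infinity>"
proof
  fix k :: nat
  obtain p where p: "p > u" and B: "(SUP \<theta>\<in>S. \<integral>\<^sup>+ n. ennreal (real n powr p) \<partial>measure_pmf (P \<theta>)) < \<infinity>"
    using assms(4) by auto
  define Bd where "Bd = (SUP \<theta>\<in>S. \<integral>\<^sup>+ n. ennreal (real n powr p) \<partial>measure_pmf (P \<theta>))"
  define M where "M = enn2real Bd + 1"
  have M: "M > 0" unfolding M_def by (simp add: enn2real_nonneg add_nonneg_pos)
  have Mb: "(\<integral>\<^sup>+ n. ennreal (real n powr p) \<partial>measure_pmf (P \<theta>)) \<le> ennreal M" if "\<theta> \<in> S" for \<theta>
  proof -
    have "(\<integral>\<^sup>+ n. ennreal (real n powr p) \<partial>measure_pmf (P \<theta>)) \<le> Bd"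
      unfolding Bd_def using that by (rule SUP_upper)
    also have "\<dots> = ennreal (enn2real Bd)" using B Bd_def by (simp add: ennreal_enn2real)
    also have "\<dots> \<le> ennreal M" unfolding M_def by (intro ennreal_leI) simp
    finally show ?thesis .
  qed
  have u: "u > 0" by (rule assms(1))
  have pp: "p > 0" using p u by simp
  define \<alpha> where "\<alpha> = (1/p + 1/u)/2"
  have up: "1/p < 1/u" using p u by (simp add: frac_less2)
  have a: "\<alpha> > 0" "\<alpha> < 1/u" using up pp u by (auto simp: \<alpha>_def intro!: add_pos_pos)
  have pa: "p * \<alpha> > 1"
  proof -
    have "1/p < \<alpha>" using up by (simp add: \<alpha>_def)
    thus ?thesis using pp by (simp add: divide_less_eq mult.commute)
  qed
  define K where "K = (1 + real k ^ k / ((1/u - \<alpha>)/4) ^ k) * exp (\<alpha>\<^sup>2/(1/u - \<alpha>) + \<alpha>/2) * sqrt (2*pi) powr \<alpha> / sqrt (2*pi)"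
  have K: "K \<ge> 0" unfolding K_def using a by (intro divide_nonneg_nonneg mult_nonneg_nonneg add_nonneg_nonneg) auto
  define f where "f = (\<lambda>n::nat. K * M powr \<alpha> * (real n + 1) powr (-(p*\<alpha>)))"
  have f0: "f n \<ge> 0" for n unfolding f_def using K by simp
  have sf: "summable f"
  proof -
    have "summable (\<lambda>n::nat. real n powr (-(p*\<alpha>)))" using pa by (subst summable_real_powr_iff) simp
    hence "summable (\<lambda>n::nat. real (Suc n) powr (-(p*\<alpha>)))" by (subst summable_Suc_iff)
    hence "summable (\<lambda>n::nat. (real n + 1) powr (-(p*\<alpha>)))" by (simp add: add.commute)
    thus ?thesis unfolding f_def by (intro summable_mult)
  qed
  have bnd: "m_summand P k u \<theta> n \<le> f n" if "\<theta> \<in> S" for \<theta> n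
  proof -
    have T: "1 - Cn P \<theta> n \<le> M / (real n + 1) powr p"
      unfolding Cn_def using markov_tail[OF pp _ Mb[OF that]] M by simp
    have "m_summand P k u \<theta> n \<le> K * (M / (real n + 1) powr p) powr \<alpha>"
      unfolding K_def by (rule summand_bound[OF u a T])
    also have "(M / (real n + 1) powr p) powr \<alpha> = M powr \<alpha> * (real n + 1) powr (-(p*\<alpha>))"
      using M by (simp add: powr_divide powr_powr powr_minus_divide)
    finally show ?thesis unfolding f_def by (simp add: mult_ac)
  qed
  have "m_fun P k u \<theta> \<le> ennreal (suminf f)" if "\<theta> \<in> S" for \<theta>
  proof -
    have "m_fun P k u \<theta> \<le> (\<Sum>n. ennreal (f n))"
      unfolding m_fun_def by (intro suminf_le ennreal_leI bnd[OF that]) auto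
    also have "\<dots> = ennreal (suminf f)" using f0 sf by (simp add: suminf_ennreal2)
    finally show ?thesis .
  qed
  hence "(SUP \<theta>\<in>S. m_fun P k u \<theta>) \<le> ennreal (suminf f)" by (intro SUP_least)
  also have "\<dots> < \<infinity>" by simp
  finally show "(SUP \<theta>\<in>S. m_fun P k u \<theta>) < \<infinity>" .
qed

end
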